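(* Consider the non-amortized variant of the algorithmic framework described below with parameters $\gamma\in(0,1)$, $\eta=\gamma^{-1}$ and $\xi=2\gamma^{-1}$. Then the framework maintains $\ell_i\le(1+\eta)T$ for every machine $i$, where $\ell_i=\sum_{j\in \hat J_i\cup\check J_i}p_j/s_i$ is the total load of machine $i$ and $T$ is the current guess.
   Context: Problem: machines $1,\dots,m$ with speeds $s_1\ge s_2\ge\dots\ge s_m>0$; jobs arrive online, job $j$ has size $p_j>0$; the load of job $j$ on machine $i$ is $p_j/s_i$. Framework (non-amortized variant): it keeps a guess $T$ and for each machine $i$ a partition of its jobs into old jobs $\hat J_i$ and new jobs $\check J_i$. Machine $i$ is saturated if $\check\ell_i:=\sum_{j\in\check J_i}p_j/s_i\ge T$, and $\eta$-eligible for job $j$ if $p_j/s_i\le \eta T$. Let $\tilde{\mathcal M}(\eta,j)$ be the set of machines that are $\eta$-eligible for $j$ and not saturated. When the first job $j_1$ arrives, set $T=p_{j_1}/s_1$ and place $j_1$ on machine 1. When a later job $j^*$ arrives, put it into a priority queue $Q$ (larger size = higher priority) and run: while $Q$ is nonempty, remove the largest job $j'$ from $Q$; then repeat: if $\tilde{\mathcal M}(\eta,j')\ne\emptyset$, choose a slowest machine $i'$ in it, move every $j\in\hat J_{i'}$ with $p_j\ge \eta^{-1}p_{j'}$ from $\hat J_{i'}$ to $\check J_{i'}$, and if $i'$ is still not saturated stop repeating; otherwise set $T:=\xi T$ and for every machine $i$ move all jobs of $\check J_i$ to $\hat J_i$. After a machine $i'$ is found, set $\pi:=\gamma p_{j'}$;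 go through the jobs $j\in\hat J_{i'}$ in non-increasing order of size and, whenever $p_j\le\pi$, set $\pi:=\pi-p_j$ and move $j$ from $\hat J_{i'}$ into $Q$ (removing it from $i'$). Finally add $j'$ to $\check J_{i'}$ (any leftover $\pi$ is discarded). *)

theory Defs
  imports Complex_Main
begin

text \<open>Machines are 1..m with speeds s :: nat => real; jobs are of an arbitrary type 'j
  with sizes p :: 'j => real.  The framework is modelled as a nondeterministic small-step
  transition system (ties in the priority queue, among slowest machines, and among
  equal-size old jobs are resolved arbitrarily).\<close>

datatype 'j phase =
    Idle
  | Search 'j                       \<comment> \<open>job j' removed from Q, looking for a machine\<close>
  | Remove 'j nat real "'j set"     \<comment> \<open>j', chosen machine i', budget pi, old jobs not yet examined\<close>

record 'j fstate =
  thr :: real                 \<comment> \<open>the guess T\<close>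
  old :: "nat \<Rightarrow> 'j set"     \<comment> \<open>hat J_i\<close>
  new :: "nat \<Rightarrow> 'j set"     \<comment> \<open>check J_i\<close>
  queue :: "'j set"
  phase :: "'j phase"
  pending :: "'j list"
  started :: bool

definition init_state :: "'j list \<Rightarrow> 'j fstate" where
  "init_state js = \<lparr>thr = 0, old = (\<lambda>_. {}), new = (\<lambda>_. {}), queue = {}, phase = Idle,
                     pending = js, started = False\<rparr>"

definition total_load :: "(nat \<Rightarrow> real) \<Rightarrow> ('j \<Rightarrow> real) \<Rightarrow> 'j fstate \<Rightarrow> nat \<Rightarrow> real" where
  "total_load s p \<sigma> i = (\<Sum>j\<in>old \<sigma> i \<union> new \<sigma> i. p j / s i)"

definition new_load :: "(nat \<Rightarrow> real) \<Rightarrow> ('j \<Rightarrow> real) \<Rightarrow> 'j fstate \<Rightarrow> nat \<Rightarrow> real" where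
  "new_load s p \<sigma> i = (\<Sum>j\<in>new \<sigma> i. p j / s i)"

definition saturated :: "(nat \<Rightarrow> real) \<Rightarrow> ('j \<Rightarrow> real) \<Rightarrow> 'j fstate \<Rightarrow> nat \<Rightarrow> bool" where
  "saturated s p \<sigma> i \<longleftrightarrow> new_load s p \<sigma> i \<ge> thr \<sigma>"

definition eligible :: "(nat \<Rightarrow> real) \<Rightarrow> ('j \<Rightarrow> real) \<Rightarrow> real \<Rightarrow> 'j fstate \<Rightarrow> 'j \<Rightarrow> nat \<Rightarrow> bool" where
  "eligible s p \<eta> \<sigma> j i \<longleftrightarrow> p j / s i \<le> \<eta> * thr \<sigma>"

definition Mtilde :: "nat \<Rightarrow> (nat \<Rightarrow> real) \<Rightarrow> ('j \<Rightarrow> real) \<Rightarrow> real \<Rightarrow> 'j fstate \<Rightarrow> 'j \<Rightarrow> nat set" where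
  "Mtilde m s p \<eta> \<sigma> j = {i \<in> {1..m}. eligible s p \<eta> \<sigma> j i \<and> \<not> saturated s p \<sigma> i}"

inductive fstep :: "nat \<Rightarrow> (nat \<Rightarrow> real) \<Rightarrow> ('j \<Rightarrow> real) \<Rightarrow> real \<Rightarrow> real \<Rightarrow> real
                     \<Rightarrow> 'j fstate \<Rightarrow> 'j fstate \<Rightarrow> bool"
  for m s p \<gamma> \<eta> \<xi> where
  first:
    "\<lbrakk> \<not> started \<sigma>; pending \<sigma> = j # js \<rbrakk> \<Longrightarrow>
     fstep m s p \<gamma> \<eta> \<xi> \<sigma>
       (\<sigma>\<lparr>thr := p j / s 1, new := (\<lambda>_. {})(1 := {j}), old := (\<lambda>_. {}),
          pending := js, started := True\<rparr>)"
| arrive: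
    "\<lbrakk> started \<sigma>; phase \<sigma> = Idle; queue \<sigma> = {}; pending \<sigma> = j # js \<rbrakk> \<Longrightarrow>
     fstep m s p \<gamma> \<eta> \<xi> \<sigma> (\<sigma>\<lparr>queue := {j}, pending := js\<rparr>)"
| pop:
    "\<lbrakk> started \<sigma>; phase \<sigma> = Idle; j \<in> queue \<sigma>; \<forall>k\<in>queue \<sigma>. p k \<le> p j \<rbrakk> \<Longrightarrow>
     fstep m s p \<gamma> \<eta> \<xi> \<sigma> (\<sigma>\<lparr>queue := queue \<sigma> - {j}, phase := Search j\<rparr>)"
| found:
    "\<lbrakk> phase \<sigma> = Search j'; i' \<in> Mtilde m s p \<eta> \<sigma> j';
       \<forall>i\<in>Mtilde m s p \<eta> \<sigma> j'. s i' \<le> s i;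
       \<sigma>1 = \<sigma>\<lparr>old := (old \<sigma>)(i' := {j \<in> old \<sigma> i'. \<not> (p j \<ge> p j' / \<eta>)}),
                new := (new \<sigma>)(i' := new \<sigma> i' \<union> {j \<in> old \<sigma> i'. p j \<ge> p j' / \<eta>})\<rparr> \<rbrakk> \<Longrightarrow>
     fstep m s p \<gamma> \<eta> \<xi> \<sigma>
       (if \<not> saturated s p \<sigma>1 i'
        then \<sigma>1\<lparr>phase := Remove j' i' (\<gamma> * p j') (old \<sigma>1 i')\<rparr>
        else \<sigma>1)"
| raise:
    "\<lbrakk> phase \<sigma> = Search j'; Mtilde m s p \<eta> \<sigma> j' = {} \<rbrakk> \<Longrightarrow>
     fstep m s p \<gamma> \<eta> \<xi> \<sigma>
       (\<sigma>\<lparr>thr := \<xi> * thr \<sigma>, old := (\<lambda>i. old \<sigma> i \<union> new \<sigma> i), new := (\<lambda>_. {})\<rparr>)"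
| remove_take:
    "\<lbrakk> phase \<sigma> = Remove j' i' \<pi> U; j \<in> U; \<forall>k\<in>U. p k \<le> p j; p j \<le> \<pi> \<rbrakk> \<Longrightarrow>
     fstep m s p \<gamma> \<eta> \<xi> \<sigma>
       (\<sigma>\<lparr>old := (old \<sigma>)(i' := old \<sigma> i' - {j}), queue := queue \<sigma> \<union> {j},
          phase := Remove j' i' (\<pi> - p j) (U - {j})\<rparr>)"
| remove_skip:
    "\<lbrakk> phase \<sigma> = Remove j' i' \<pi> U; j \<in> U; \<forall>k\<in>U. p k \<le> p j; \<not> p j \<le> \<pi> \<rbrakk> \<Longrightarrow>
     fstep m s p \<gamma> \<eta> \<xi> \<sigma> (\<sigma>\<lparr>phase := Remove j' i' \<pi> (U - {j})\<rparr>)"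
| place:
    "\<lbrakk> phase \<sigma> = Remove j' i' \<pi> {} \<rbrakk> \<Longrightarrow>
     fstep m s p \<gamma> \<eta> \<xi> \<sigma> (\<sigma>\<lparr>new := (new \<sigma>)(i' := new \<sigma> i' \<union> {j'}), phase := Idle\<rparr>)"

end

theory Submission
  imports Defs
begin

definition OL :: "(nat \<Rightarrow> real) \<Rightarrow> ('j \<Rightarrow> real) \<Rightarrow> 'j fstate \<Rightarrow> nat \<Rightarrow> real" where
  "OL s p \<sigma> i = (\<Sum>j\<in>old \<sigma> i. p j / s i)"

definition RI :: "nat \<Rightarrow> (nat \<Rightarrow> real) \<Rightarrow> ('j \<Rightarrow> real) \<Rightarrow> real \<Rightarrow> real \<Rightarrow> 'j set \<Rightarrow> 'j fstate
   \<Rightarrow> 'j \<Rightarrow> nat \<Rightarrow> real \<Rightarrow> 'j set \<Rightarrow> bool" where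
  "RI m s p \<gamma> \<eta> J \<sigma> j' i' \<pi> U \<longleftrightarrow>
     i' \<in> {1..m} \<and> j' \<in> J \<and> new_load s p \<sigma> i' < thr \<sigma> \<and> p j' / s i' \<le> \<eta> * thr \<sigma> \<and>
     U \<subseteq> old \<sigma> i' \<and> \<pi> \<le> \<gamma> * p j' \<and> (\<forall>k\<in>old \<sigma> i'. p k < \<gamma> * p j') \<and>
     ((\<pi> = \<gamma> * p j' \<and> old \<sigma> i' \<subseteq> U) \<or> (\<forall>k\<in>U. p k \<le> \<gamma> * p j' - \<pi>)) \<and>
     (old \<sigma> i' - U \<noteq> {} \<longrightarrow> \<pi> \<le> \<gamma> * p j' - \<pi>) \<and>
     2 * (OL s p \<sigma> i' + (\<gamma> * p j' - \<pi>) / s i') + \<gamma> * new_load s p \<sigma> i' \<le> (1 + \<gamma>) * thr \<sigma>"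

definition Inv :: "nat \<Rightarrow> (nat \<Rightarrow> real) \<Rightarrow> ('j \<Rightarrow> real) \<Rightarrow> real \<Rightarrow> real \<Rightarrow> 'j set \<Rightarrow> 'j fstate \<Rightarrow> bool" where
  "Inv m s p \<gamma> \<eta> J \<sigma> \<longleftrightarrow>
     0 \<le> thr \<sigma> \<and> (\<forall>i. old \<sigma> i \<subseteq> J \<and> new \<sigma> i \<subseteq> J) \<and> queue \<sigma> \<subseteq> J \<and> set (pending \<sigma>) \<subseteq> J \<and>
     (\<not> started \<sigma> \<longrightarrow> phase \<sigma> = Idle) \<and>
     (\<forall>i\<in>{1..m}. 2 * OL s p \<sigma> i + \<gamma> * new_load s p \<sigma> i \<le> (1 + \<gamma>) * thr \<sigma> \<and>
                  OL s p \<sigma> i + new_load s p \<sigma> i \<le> (1 + \<eta>) * thr \<sigma>) \<and>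
     (case phase \<sigma> of Idle \<Rightarrow> True | Search j' \<Rightarrow> j' \<in> J
        | Remove j' i' \<pi> U \<Rightarrow> RI m s p \<gamma> \<eta> J \<sigma> j' i' \<pi> U)"

lemma sum_union_le:
  fixes f :: "'a \<Rightarrow> real"
  assumes "finite A" "finite B" "\<forall>x\<in>A\<union>B. 0 \<le> f x"
  shows "sum f (A \<union> B) \<le> sum f A + sum f B"
proof -
  have "0 \<le> sum f (A \<inter> B)" using assms(3) by (intro sum_nonneg) auto
  thus ?thesis using sum_Un[OF assms(1,2), of f] by linarith
qed

lemma sum_split_filter:
  fixes f :: "'a \<Rightarrow> real"
  assumes "finite A"
  shows "sum f A = sum f {x\<in>A. P x} + sum f {x\<in>A. \<not> P x}"
proof -
  have "A = {x\<in>A. P x} \<union> {x\<in>A. \<not> P x}" by auto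
  hence "sum f A = sum f ({x\<in>A. P x} \<union> {x\<in>A. \<not> P x})" by simp
  also have "\<dots> = sum f {x\<in>A. P x} + sum f {x\<in>A. \<not> P x}"
    by (rule sum.union_disjoint) (use assms in auto)
  finally show ?thesis .
qed

lemma inv_init:
  "Inv m s p \<gamma> \<eta> J (init_state js) \<longleftrightarrow> set js \<subseteq> J"
  by (simp add: Inv_def init_state_def OL_def new_load_def)

lemma step_inv:
  assumes g0: "0 < \<gamma>" and g1: "\<gamma> < 1" and eta: "\<eta> = 1 / \<gamma>" and xi: "\<xi> = 2 / \<gamma>"
    and finJ: "finite J" and pJ: "\<forall>j\<in>J. p j > 0" and sp: "\<forall>i\<in>{1..m}. s i > 0" and m1: "m \<ge> 1"
    and st: "fstep m s p \<gamma> \<eta> \<xi> \<sigma> \<sigma>'" and inv: "Inv m s p \<gamma> \<eta> J \<sigma>"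
  shows "Inv m s p \<gamma> \<eta> J \<sigma>'"
  using st
proof cases
  case (first j js')
  have jJ: "j \<in> J" using inv first by (auto simp: Inv_def)
  have T0: "0 < p j / s 1" using pJ jJ sp m1 by auto
  have ph: "phase \<sigma> = Idle" using inv first by (auto simp: Inv_def)
  have nl: "new_load s p \<sigma>' i = (if i = 1 then p j / s 1 else 0)" for i
    using first by (simp add: new_load_def)
  have ol: "OL s p \<sigma>' i = 0" for i using first by (simp add: OL_def)
  have A: "2 * OL s p \<sigma>' i + \<gamma> * new_load s p \<sigma>' i \<le> (1 + \<gamma>) * thr \<sigma>'" for i
  proof -
    have "\<gamma> * (p j / s 1) \<le> (1+\<gamma>) * (p j / s 1)" by (intro mult_right_mono) (use T0 in auto)
    moreover have "0 \<le> (1+\<gamma>) * (p j / s 1)" by (intro mult_nonneg_nonneg) (use T0 g0 in auto)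
    ultimately show ?thesis using first unfolding ol nl by auto
  qed
  have B: "OL s p \<sigma>' i + new_load s p \<sigma>' i \<le> (1 + \<eta>) * thr \<sigma>'" for i
  proof -
    have "0 \<le> \<eta>" using eta g0 by simp
    have "(p j / s 1) \<le> (1+\<eta>) * (p j / s 1)" using mult_right_mono[of 1 "1+\<eta>" "p j / s 1"] T0 `0 \<le> \<eta>` by simp
    moreover have "0 \<le> (1+\<eta>) * (p j / s 1)" by (intro mult_nonneg_nonneg) (use T0 `0 \<le> \<eta>` in auto)
    ultimately show ?thesis using first unfolding ol nl by auto
  qed
  show ?thesis using inv first jJ T0 ph A B by (auto simp: Inv_def)
next
  case (arrive j js')
  then show ?thesis using inv by (auto simp: Inv_def OL_def new_load_def RI_def)
next
  case (pop j)
  then show ?thesis using inv by (auto simp: Inv_def OL_def new_load_def RI_def)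
next
  case (found j' i' \<sigma>1)
  define Big where "Big = {k \<in> old \<sigma> i'. p j' / \<eta> \<le> p k}"
  define Small where "Small = {k \<in> old \<sigma> i'. \<not> p j' / \<eta> \<le> p k}"
  have s1: "\<sigma>1 = \<sigma>\<lparr>old := (old \<sigma>)(i' := Small), new := (new \<sigma>)(i' := new \<sigma> i' \<union> Big)\<rparr>"
    using found by (simp add: Big_def Small_def)
  have Mt: "i' \<in> {1..m}" "p j' / s i' \<le> \<eta> * thr \<sigma>" "\<not> saturated s p \<sigma> i'"
    using found by (auto simp: Mtilde_def eligible_def)
  have si: "0 < s i'" using sp Mt by auto
  have sub: "\<forall>i. old \<sigma> i \<subseteq> J \<and> new \<sigma> i \<subseteq> J" using inv by (simp add: Inv_def)
  have j'J: "j' \<in> J" using inv found by (simp add: Inv_def)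
  have sd: "started \<sigma>" using inv found by (auto simp: Inv_def)
  have q: "queue \<sigma> \<subseteq> J" "set (pending \<sigma>) \<subseteq> J" "0 \<le> thr \<sigma>" using inv by (simp_all add: Inv_def)
  have finO: "finite (old \<sigma> i')" using sub finJ finite_subset by blast
  have finN: "finite (new \<sigma> i')" using sub finJ finite_subset by blast
  have finB: "finite Big" using finO by (simp add: Big_def)
  have nnO: "0 \<le> p k / s i'" if "k \<in> old \<sigma> i' \<or> k \<in> new \<sigma> i'" for k
  proof -
    have "k \<in> J" using sub that by blast
    then show ?thesis using pJ si by (simp add: less_imp_le)
  qed
  define b where "b = (\<Sum>k\<in>Big. p k / s i')"
  have b0: "0 \<le> b" unfolding b_def using nnO by (intro sum_nonneg) (auto simp: Big_def)
  have ol1: "OL s p \<sigma>1 i' = OL s p \<sigma> i' - b"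
    using sum_split_filter[OF finO, of "\<lambda>k. p k / s i'" "\<lambda>k. p j' / \<eta> \<le> p k"]
    unfolding s1 OL_def b_def Big_def Small_def by simp
  have nl1: "new_load s p \<sigma>1 i' \<le> new_load s p \<sigma> i' + b"
    using sum_union_le[OF finN finB, of "\<lambda>k. p k / s i'"] nnO
    unfolding s1 new_load_def b_def by (auto simp: Big_def)
  have oth: "OL s p \<sigma>1 i = OL s p \<sigma> i" "new_load s p \<sigma>1 i = new_load s p \<sigma> i" if "i \<noteq> i'" for i
    using that unfolding s1 OL_def new_load_def by simp_all
  have th1: "thr \<sigma>1 = thr \<sigma>" using s1 by simp
  have gb: "\<gamma> * b \<le> 2 * b" using b0 g1 by (intro mult_right_mono) auto
  have AB: "2 * OL s p \<sigma>1 i + \<gamma> * new_load s p \<sigma>1 i \<le> (1 + \<gamma>) * thr \<sigma>1 \<and>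
            OL s p \<sigma>1 i + new_load s p \<sigma>1 i \<le> (1 + \<eta>) * thr \<sigma>1" if i: "i \<in> {1..m}" for i
  proof -
    have old_: "2 * OL s p \<sigma> i + \<gamma> * new_load s p \<sigma> i \<le> (1 + \<gamma>) * thr \<sigma> \<and>
            OL s p \<sigma> i + new_load s p \<sigma> i \<le> (1 + \<eta>) * thr \<sigma>" using inv i by (simp add: Inv_def)
    show ?thesis
    proof (cases "i = i'")
      case True
      have "\<gamma> * new_load s p \<sigma>1 i' \<le> \<gamma> * (new_load s p \<sigma> i' + b)"
        using nl1 g0 by (intro mult_left_mono) auto
      then show ?thesis using True old_ ol1 nl1 gb th1 by (simp add: distrib_left)
    next
      case False
      then show ?thesis using old_ oth th1 by simp
    qed
  qed
  have ph: "phase \<sigma> = Search j'" using found by simp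
  have sub1: "\<forall>i. old \<sigma>1 i \<subseteq> J \<and> new \<sigma>1 i \<subseteq> J" using sub unfolding s1 Big_def Small_def by auto
  show ?thesis
  proof (cases "saturated s p \<sigma>1 i'")
    case True
    then have e: "\<sigma>' = \<sigma>1" using found by simp
    show ?thesis unfolding Inv_def e using AB sub1 q sd j'J ph th1 by (simp add: s1)
  next
    case False
    then have e: "\<sigma>' = \<sigma>1\<lparr>phase := Remove j' i' (\<gamma> * p j') (old \<sigma>1 i')\<rparr>" using found by simp
    have smallt: "\<forall>k\<in>old \<sigma>1 i'. p k < \<gamma> * p j'"
    proof
      fix k assume "k \<in> old \<sigma>1 i'"
      then have "\<not> p j' / \<eta> \<le> p k" unfolding s1 Small_def by simp
      moreover have "p j' / \<eta> = \<gamma> * p j'" using g0 unfolding eta by simp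
      ultimately show "p k < \<gamma> * p j'" by simp
    qed
    have A1: "2 * OL s p \<sigma>1 i' + \<gamma> * new_load s p \<sigma>1 i' \<le> (1 + \<gamma>) * thr \<sigma>1" using AB Mt by blast
    have ri: "RI m s p \<gamma> \<eta> J \<sigma>' j' i' (\<gamma> * p j') (old \<sigma>1 i')"
      unfolding RI_def
    proof (intro conjI)
      show "new_load s p \<sigma>' i' < thr \<sigma>'" using False unfolding e saturated_def new_load_def by simp
      show "p j' / s i' \<le> \<eta> * thr \<sigma>'" using Mt th1 unfolding e by simp
      show "2 * (OL s p \<sigma>' i' + (\<gamma> * p j' - \<gamma> * p j') / s i') + \<gamma> * new_load s p \<sigma>' i' \<le> (1 + \<gamma>) * thr \<sigma>'"
        using A1 unfolding e OL_def new_load_def by simp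
    qed (use Mt j'J smallt in \<open>auto simp: e\<close>)
    show ?thesis unfolding Inv_def using AB sub1 q sd ri th1 unfolding e by (simp add: s1 OL_def new_load_def)
  qed
next
  case (raise j')
  have T0: "0 \<le> thr \<sigma>" using inv by (simp add: Inv_def)
  have sub: "old \<sigma> i \<subseteq> J" "new \<sigma> i \<subseteq> J" for i using inv by (auto simp: Inv_def)
  have key: "(1 + \<gamma>) * (\<xi> * thr \<sigma>) = 2 * ((1 + \<eta>) * thr \<sigma>)"
    using g0 unfolding eta xi by (simp add: field_simps)
  have xi1: "1 \<le> \<xi>" using g0 g1 unfolding xi by (simp add: field_simps)
  have eta0: "0 \<le> \<eta>" using g0 eta by simp
  have AB: "2 * OL s p \<sigma>' i + \<gamma> * new_load s p \<sigma>' i \<le> (1 + \<gamma>) * thr \<sigma>' \<and>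
            OL s p \<sigma>' i + new_load s p \<sigma>' i \<le> (1 + \<eta>) * thr \<sigma>'" if i: "i \<in> {1..m}" for i
  proof -
    have fin: "finite (old \<sigma> i)" "finite (new \<sigma> i)" using finite_subset[OF sub(1) finJ] finite_subset[OF sub(2) finJ] by auto
    have si: "0 < s i" using sp i by auto
    have nn: "\<forall>x\<in>old \<sigma> i \<union> new \<sigma> i. 0 \<le> p x / s i"
    proof
      fix x assume "x \<in> old \<sigma> i \<union> new \<sigma> i"
      then have "x \<in> J" using sub by blast
      then have "0 < p x" using pJ by auto
      then show "0 \<le> p x / s i" using si by simp
    qed
    have o1: "OL s p \<sigma>' i \<le> OL s p \<sigma> i + new_load s p \<sigma> i"
      using raise sum_union_le[OF fin nn] by (simp add: OL_def new_load_def)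
    have o2: "OL s p \<sigma> i + new_load s p \<sigma> i \<le> (1 + \<eta>) * thr \<sigma>" using inv i by (simp add: Inv_def)
    have n0: "new_load s p \<sigma>' i = 0" using raise by (simp add: new_load_def)
    have t': "thr \<sigma>' = \<xi> * thr \<sigma>" using raise by simp
    have o3: "(1 + \<eta>) * thr \<sigma> \<le> (1 + \<eta>) * (\<xi> * thr \<sigma>)"
      by (intro mult_left_mono) (use mult_right_mono[OF xi1 T0] eta0 in auto)
    show ?thesis unfolding n0 t' key using o1 o2 o3 by linarith
  qed
  have t0: "0 \<le> \<xi> * thr \<sigma>" using xi1 T0 by simp
  have ph: "j' \<in> J" using inv raise by (simp add: Inv_def)
  have q: "queue \<sigma> \<subseteq> J" "set (pending \<sigma>) \<subseteq> J" using inv by (simp_all add: Inv_def)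
  have sub': "\<forall>i. old \<sigma>' i \<subseteq> J \<and> new \<sigma>' i \<subseteq> J" using sub raise by simp
  have sd: "started \<sigma>" using inv raise by (auto simp: Inv_def)
  show ?thesis unfolding Inv_def using AB t0 ph q sub' sd raise(1,2) by simp
next
  case (remove_take j' i' \<pi> U j)
  have ri: "RI m s p \<gamma> \<eta> J \<sigma> j' i' \<pi> U" using inv remove_take by (simp add: Inv_def)
  have jo: "j \<in> old \<sigma> i'" using ri remove_take by (auto simp: RI_def)
  have i'm: "i' \<in> {1..m}" using ri by (simp add: RI_def)
  have si: "0 < s i'" using sp i'm by auto
  have sub: "\<forall>i. old \<sigma> i \<subseteq> J \<and> new \<sigma> i \<subseteq> J" using inv by (simp add: Inv_def)
  have jJ: "j \<in> J" using sub jo by blast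
  have pj: "0 < p j" using pJ jJ by auto
  have fin: "finite (old \<sigma> i')" using sub finJ finite_subset by blast
  have olq: "OL s p \<sigma>' i' = OL s p \<sigma> i' - p j / s i'"
    using remove_take jo fin by (simp add: OL_def sum_diff1)
  have olo: "OL s p \<sigma>' i = OL s p \<sigma> i" if "i \<noteq> i'" for i
    using remove_take that by (simp add: OL_def)
  have nlq: "new_load s p \<sigma>' i = new_load s p \<sigma> i" for i
    using remove_take by (simp add: new_load_def)
  have thq: "thr \<sigma>' = thr \<sigma>" using remove_take by simp
  have pjs: "0 < p j / s i'" using pj si by simp
  have ole: "OL s p \<sigma>' i \<le> OL s p \<sigma> i" for i
    using olq olo pjs by (cases "i = i'") auto
  have AB: "2 * OL s p \<sigma>' i + \<gamma> * new_load s p \<sigma>' i \<le> (1 + \<gamma>) * thr \<sigma>' \<and>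
            OL s p \<sigma>' i + new_load s p \<sigma>' i \<le> (1 + \<eta>) * thr \<sigma>'" if i: "i \<in> {1..m}" for i
  proof -
    have "2 * OL s p \<sigma> i + \<gamma> * new_load s p \<sigma> i \<le> (1 + \<gamma>) * thr \<sigma> \<and>
            OL s p \<sigma> i + new_load s p \<sigma> i \<le> (1 + \<eta>) * thr \<sigma>" using inv i by (simp add: Inv_def)
    then show ?thesis using ole[of i] unfolding nlq thq by linarith
  qed
  have key: "OL s p \<sigma>' i' + (\<gamma> * p j' - (\<pi> - p j)) / s i' = OL s p \<sigma> i' + (\<gamma> * p j' - \<pi>) / s i'"
    unfolding olq using si by (simp add: field_simps)
  have umax: "\<forall>k\<in>U. p k \<le> p j" using remove_take by simp
  have pile: "\<pi> \<le> \<gamma> * p j'" using ri by (simp add: RI_def)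
  have diff: "old \<sigma>' i' - (U - {j}) = old \<sigma> i' - U" using remove_take by auto
  have ri': "RI m s p \<gamma> \<eta> J \<sigma>' j' i' (\<pi> - p j) (U - {j})"
    unfolding RI_def
  proof (intro conjI)
    show "(\<pi> - p j = \<gamma> * p j' \<and> old \<sigma>' i' \<subseteq> U - {j}) \<or> (\<forall>k\<in>U - {j}. p k \<le> \<gamma> * p j' - (\<pi> - p j))"
      using umax pile by force
    show "old \<sigma>' i' - (U - {j}) \<noteq> {} \<longrightarrow> \<pi> - p j \<le> \<gamma> * p j' - (\<pi> - p j)"
      using ri pj unfolding diff RI_def by auto
    show "2 * (OL s p \<sigma>' i' + (\<gamma> * p j' - (\<pi> - p j)) / s i') + \<gamma> * new_load s p \<sigma>' i' \<le> (1 + \<gamma>) * thr \<sigma>'"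
      unfolding key nlq thq using ri by (simp add: RI_def)
  qed (use ri remove_take pj pile in \<open>auto simp: RI_def new_load_def\<close>)
  have sd: "started \<sigma>" using inv remove_take by (auto simp: Inv_def)
  have q: "queue \<sigma> \<subseteq> J" "set (pending \<sigma>) \<subseteq> J" "0 \<le> thr \<sigma>" using inv by (simp_all add: Inv_def)
  have sub': "\<forall>i. old \<sigma>' i \<subseteq> J \<and> new \<sigma>' i \<subseteq> J" using sub remove_take by auto
  show ?thesis unfolding Inv_def using AB ri' q sub' sd jJ remove_take(1) by simp
next
  case (remove_skip j' i' \<pi> U j)
  have ri: "RI m s p \<gamma> \<eta> J \<sigma> j' i' \<pi> U" using inv remove_skip by (simp add: Inv_def)
  have jo: "j \<in> old \<sigma> i'" using ri remove_skip by (auto simp: RI_def)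
  have lt: "p j < \<gamma> * p j'" using ri jo by (auto simp: RI_def)
  have c2: "\<forall>k\<in>U. p k \<le> \<gamma> * p j' - \<pi>" using ri lt remove_skip by (auto simp: RI_def)
  have "p j \<le> \<gamma> * p j' - \<pi>" using c2 remove_skip by auto
  hence R: "\<pi> \<le> \<gamma> * p j' - \<pi>" using remove_skip by linarith
  have ri': "RI m s p \<gamma> \<eta> J \<sigma>' j' i' \<pi> (U - {j})"
    using ri R c2 remove_skip unfolding RI_def by (auto simp: OL_def new_load_def)
  show ?thesis using inv ri' remove_skip by (simp add: Inv_def OL_def new_load_def)
next
  case (place j' i' \<pi>)
  have ri: "RI m s p \<gamma> \<eta> J \<sigma> j' i' \<pi> {}" using inv place by (simp add: Inv_def)
  have Mt: "i' \<in> {1..m}" "j' \<in> J" using ri by (simp_all add: RI_def)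
  have si: "0 < s i'" using sp Mt by auto
  have sub: "\<forall>i. old \<sigma> i \<subseteq> J \<and> new \<sigma> i \<subseteq> J" using inv by (simp add: Inv_def)
  have sd: "started \<sigma>" using inv place by (auto simp: Inv_def)
  have q: "queue \<sigma> \<subseteq> J" "set (pending \<sigma>) \<subseteq> J" "0 \<le> thr \<sigma>" using inv by (simp_all add: Inv_def)
  have finN: "finite (new \<sigma> i')" using sub finJ finite_subset by blast
  have pj': "0 < p j'" using pJ Mt by auto
  define T where "T = thr \<sigma>"
  define Ol where "Ol = OL s p \<sigma> i'"
  define N where "N = new_load s p \<sigma> i'"
  define N' where "N' = new_load s p \<sigma>' i'"
  define a where "a = p j' / s i'"
  define r where "r = (\<gamma> * p j' - \<pi>) / s i'"
  have a0: "0 \<le> a" using pj' si by (simp add: a_def)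
  have NT: "N < T" and aT: "a \<le> \<eta> * T" and pile: "\<pi> \<le> \<gamma> * p j'"
    and ne: "old \<sigma> i' \<noteq> {} \<Longrightarrow> \<pi> \<le> \<gamma> * p j' - \<pi>"
    and last: "2 * (Ol + r) + \<gamma> * N \<le> (1 + \<gamma>) * T"
    using ri by (simp_all add: RI_def T_def N_def a_def Ol_def r_def)
  have r0: "0 \<le> r" using pile si by (simp add: r_def)
  have nn: "\<forall>x\<in>new \<sigma> i' \<union> {j'}. 0 \<le> p x / s i'"
  proof
    fix x assume "x \<in> new \<sigma> i' \<union> {j'}"
    then have "x \<in> J" using sub Mt by blast
    then show "0 \<le> p x / s i'" using pJ si by (simp add: less_imp_le)
  qed
  have NN: "N' \<le> N + a"
    using sum_union_le[OF finN _ nn] place unfolding N'_def N_def a_def new_load_def by simp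
  have O0: "0 \<le> Ol" unfolding Ol_def OL_def using sub pJ si
    by (intro sum_nonneg) (force intro: less_imp_le)
  have g2: "0 \<le> 2 - \<gamma>" using g1 by simp
  have f1: "\<gamma> * N \<le> \<gamma> * T" using NT g0 by (intro mult_left_mono) auto
  have f2: "\<gamma> * a \<le> T"
  proof -
    have "\<gamma> * a \<le> \<gamma> * (\<eta> * T)" using aT g0 by (intro mult_left_mono) auto
    also have "\<dots> = T" using g0 unfolding eta by simp
    finally show ?thesis .
  qed
  have f3: "(2 - \<gamma>) * (N + a) \<le> (2 - \<gamma>) * ((1 + \<eta>) * T)"
  proof (intro mult_left_mono g2)
    have "T = 1 * T" by simp
    have "a \<le> \<eta> * T" by (rule aT)
    then show "N + a \<le> (1 + \<eta>) * T" using NT by (simp add: distrib_right)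
  qed
  have f4: "(1 + \<gamma>) * T + (2 - \<gamma>) * ((1 + \<eta>) * T) = 2 * ((1 + \<eta>) * T)"
    using g0 unfolding eta by (simp add: field_simps)
  have f5: "\<gamma> * N' \<le> \<gamma> * (N + a)" using NN g0 by (intro mult_left_mono) auto
  have e1: "\<gamma> * (N + a) = \<gamma> * N + \<gamma> * a" by (simp add: algebra_simps)
  have e2: "(2 - \<gamma>) * (N + a) = 2 * N + 2 * a - \<gamma> * N - \<gamma> * a" by (simp add: algebra_simps)
  have e3: "(1 + \<gamma>) * T = T + \<gamma> * T" by (simp add: algebra_simps)
  have e4: "(1 + \<eta>) * T = T + \<eta> * T" by (simp add: algebra_simps)
  have O': "OL s p \<sigma>' i' = Ol" using place by (simp add: OL_def Ol_def)
  have cs: "Ol = 0 \<or> \<gamma> * a \<le> 2 * r"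
  proof (cases "old \<sigma> i' = {}")
    case True then show ?thesis by (simp add: Ol_def OL_def)
  next
    case False
    then have "\<gamma> * p j' \<le> 2 * (\<gamma> * p j' - \<pi>)" using ne by simp
    then have "\<gamma> * p j' / s i' \<le> 2 * (\<gamma> * p j' - \<pi>) / s i'" using si by (simp add: divide_right_mono)
    then show ?thesis by (simp add: a_def r_def)
  qed
  have A: "2 * Ol + \<gamma> * N' \<le> (1 + \<gamma>) * T \<and> Ol + N' \<le> (1 + \<eta>) * T"
    using cs
  proof
    assume "Ol = 0"
    then show ?thesis using f1 f2 f3 f4 f5 e1 e2 e3 e4 NN last r0 O0 NT aT by (smt (verit))
  next
    assume "\<gamma> * a \<le> 2 * r"
    then show ?thesis using f1 f2 f3 f4 f5 e1 e2 e3 e4 NN last r0 O0 NT aT by (smt (verit))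
  qed
  have AB: "2 * OL s p \<sigma>' i + \<gamma> * new_load s p \<sigma>' i \<le> (1 + \<gamma>) * thr \<sigma>' \<and>
            OL s p \<sigma>' i + new_load s p \<sigma>' i \<le> (1 + \<eta>) * thr \<sigma>'" if i: "i \<in> {1..m}" for i
  proof (cases "i = i'")
    case True
    then show ?thesis using A O' place unfolding N'_def T_def by simp
  next
    case False
    have "2 * OL s p \<sigma> i + \<gamma> * new_load s p \<sigma> i \<le> (1 + \<gamma>) * thr \<sigma> \<and>
            OL s p \<sigma> i + new_load s p \<sigma> i \<le> (1 + \<eta>) * thr \<sigma>" using inv i by (simp add: Inv_def)
    then show ?thesis using False place by (simp add: OL_def new_load_def)
  qed
  have sub': "\<forall>i. old \<sigma>' i \<subseteq> J \<and> new \<sigma>' i \<subseteq> J" using sub Mt place by auto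
  show ?thesis unfolding Inv_def using AB sub' q sd place by simp
qed


lemma reach_inv:
  assumes g0: "0 < \<gamma>" and g1: "\<gamma> < 1" and eta: "\<eta> = 1 / \<gamma>" and xi: "\<xi> = 2 / \<gamma>"
    and pJ: "\<forall>j\<in>set js. p j > 0" and sp: "\<forall>i\<in>{1..m}. s i > 0" and m1: "m \<ge> 1"
    and r: "(fstep m s p \<gamma> \<eta> \<xi>)\<^sup>*\<^sup>* (init_state js) \<sigma>"
  shows "Inv m s p \<gamma> \<eta> (set js) \<sigma>"
  using r
proof induction
  case base
  then show ?case by (simp add: inv_init)
next
  case (step y z)
  show ?case by (rule step_inv[OF g0 g1 eta xi _ pJ sp m1 step(2) step(3)]) simp
qed

theorem lemma6:
  fixes m :: nat and s :: "nat \<Rightarrow> real" and p :: "'j \<Rightarrow> real" and js :: "'j list"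
    and \<gamma> \<eta> \<xi> :: real and \<sigma> :: "'j fstate" and i :: nat
  assumes "m \<ge> 1"
    and "\<forall>i\<in>{1..m}. s i > 0"
    and "\<forall>i k. 1 \<le> i \<and> i \<le> k \<and> k \<le> m \<longrightarrow> s k \<le> s i"
    and "distinct js"
    and "\<forall>j\<in>set js. p j > 0"
    and "0 < \<gamma>" and "\<gamma> < 1"
    and "\<eta> = 1 / \<gamma>" and "\<xi> = 2 / \<gamma>"
    and "(fstep m s p \<gamma> \<eta> \<xi>)\<^sup>*\<^sup>* (init_state js) \<sigma>"
    and "i \<in> {1..m}"
  shows "total_load s p \<sigma> i \<le> (1 + \<eta>) * thr \<sigma>"
proof -
  have inv: "Inv m s p \<gamma> \<eta> (set js) \<sigma>"
    by (rule reach_inv[OF assms(6,7,8,9,5,2,1,10)])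
  have sub: "old \<sigma> i \<subseteq> set js" "new \<sigma> i \<subseteq> set js" using inv by (simp_all add: Inv_def)
  have fin: "finite (old \<sigma> i)" "finite (new \<sigma> i)" using sub finite_subset by blast+
  have si: "0 < s i" using assms(2,11) by auto
  have nn: "\<forall>x\<in>old \<sigma> i \<union> new \<sigma> i. 0 \<le> p x / s i"
  proof
    fix x assume "x \<in> old \<sigma> i \<union> new \<sigma> i"
    then have "x \<in> set js" using sub by blast
    then show "0 \<le> p x / s i" using assms(5) si by (simp add: less_imp_le)
  qed
  have "total_load s p \<sigma> i \<le> OL s p \<sigma> i + new_load s p \<sigma> i"
    using sum_union_le[OF fin nn] by (simp add: total_load_def OL_def new_load_def)
  also have "\<dots> \<le> (1 + \<eta>) * thr \<sigma>" using inv assms(11) by (simp add: Inv_def)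
  finally show ?thesis .
qed

end
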